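(* Let $p$ be prime and $H\le\mathrm{S}_n$ be in $\mathfrak{InP}(\mathrm{C}_p)$, let $\gamma$ be as in the context and $M$ a generator matrix of $\gamma(H)$. Let $I,J\subseteq\{1,\dots,k\}$ be such that there exists $\nu\in N_{\mathrm{S}_n}(H)$ with $\Omega_I^\nu=\Omega_J$. Then the rank of $M_{*,I}$ equals the rank of $M_{*,J}$. Hence the columns of $M_{*,I}$ are minimally linearly dependent if and only if the columns of $M_{*,J}$ are minimally linearly dependent.
   Context: $H\le\mathrm{S}_{n}$, $n=pk$, has orbits $\Omega_1,\dots,\Omega_k$ of size $p$ with each $G_i:=H|_{\Omega_i}$ cyclic of order $p$; $G=G_1\times\dots\times G_k$, $g_i$ a generator of $G_i$, and $\gamma:G\to\mathbb{F}_p^k$ is $\gamma(g_1^{r_1}\cdots g_k^{r_k})=(r_1,\dots,r_k)$. A generator matrix has rows forming a basis of $\gamma(H)$. For $I\subseteq\{1,\dots,k\}$, $\Omega_I=\bigcup_{i\in I}\Omega_i$ and $M_{*,I}$ is the submatrix of $M$ formed by the columns indexed by $I$. A set of vectors is minimally linearly dependent if it is linearly dependent but no proper subset is. *)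

theory Defs
  imports "Berlekamp_Zassenhaus.Finite_Field" "Jordan_Normal_Form.DL_Rank" "Jordan_Normal_Form.DL_Submatrix"
begin

definition perm_subgroup :: "nat \<Rightarrow> (nat \<Rightarrow> nat) set \<Rightarrow> bool" where
  "perm_subgroup n H \<longleftrightarrow> (\<forall>h\<in>H. h permutes {0..<n}) \<and> id \<in> H \<and>
     (\<forall>h\<in>H. \<forall>h'\<in>H. h \<circ> h' \<in> H) \<and> (\<forall>h\<in>H. inv_into UNIV h \<in> H)"

definition orbit_of :: "(nat \<Rightarrow> nat) set \<Rightarrow> nat \<Rightarrow> nat set" where
  "orbit_of H x = {h x | h. h \<in> H}"

definition restr :: "nat set \<Rightarrow> (nat \<Rightarrow> nat) \<Rightarrow> (nat \<Rightarrow> nat)" where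
  "restr A h = (\<lambda>x. if x \<in> A then h x else x)"

text \<open>The setting of the context: H \<le> S_n, n = p k, orbits \<Omega>_0,...,\<Omega>_(k-1)
  (0-based), each of size p, with H|\<Omega>_i cyclic of order p generated by g i.\<close>
definition InP_Cp_setting ::
  "nat \<Rightarrow> nat \<Rightarrow> nat \<Rightarrow> (nat \<Rightarrow> nat) set \<Rightarrow> (nat \<Rightarrow> nat set) \<Rightarrow> (nat \<Rightarrow> nat \<Rightarrow> nat) \<Rightarrow> bool" where
  "InP_Cp_setting p k n H \<Omega> g \<longleftrightarrow>
     prime p \<and> n = p * k \<and> perm_subgroup n H \<and>
     (\<forall>i<k. \<exists>x<n. \<Omega> i = orbit_of H x) \<and>
     (\<forall>x<n. \<exists>i<k. x \<in> \<Omega> i) \<and>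
     (\<forall>i<k. \<forall>j<k. i \<noteq> j \<longrightarrow> \<Omega> i \<inter> \<Omega> j = {}) \<and>
     (\<forall>i<k. card (\<Omega> i) = p) \<and>
     (\<forall>i<k. g i \<in> restr (\<Omega> i) ` H \<and>
            restr (\<Omega> i) ` H = range (\<lambda>r. g i ^^ r) \<and>
            card (restr (\<Omega> i) ` H) = p)"

text \<open>gamma(g_1^r_1 ... g_k^r_k) = (r_1,...,r_k) in F_p^k (F_p = 'p mod_ring).\<close>
definition gamma :: "nat \<Rightarrow> (nat \<Rightarrow> nat set) \<Rightarrow> (nat \<Rightarrow> nat \<Rightarrow> nat) \<Rightarrow> (nat \<Rightarrow> nat)
    \<Rightarrow> 'p::prime_card mod_ring vec" where
  "gamma k \<Omega> g h = vec k (\<lambda>i. of_nat (LEAST r. restr (\<Omega> i) h = g i ^^ r))"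

definition generator_matrix :: "nat \<Rightarrow> 'a::field vec set \<Rightarrow> 'a mat \<Rightarrow> bool" where
  "generator_matrix k C M \<longleftrightarrow> dim_col M = k \<and> distinct (rows M) \<and>
     module.lin_indpt class_ring (module_vec TYPE('a) k) (set (rows M)) \<and>
     LinearCombinations.module.span class_ring (module_vec TYPE('a) k) (set (rows M)) = C"

definition cols_sub :: "'a mat \<Rightarrow> nat set \<Rightarrow> 'a mat" where
  "cols_sub M I = submatrix M UNIV I"

definition mat_rank :: "'a::field mat \<Rightarrow> nat" where
  "mat_rank A = vec_space.rank (dim_row A) A"

definition cols_lin_dep :: "'a::field mat \<Rightarrow> nat set \<Rightarrow> bool" where
  "cols_lin_dep A S \<longleftrightarrow> (\<exists>c. (\<exists>j\<in>S. c j \<noteq> 0) \<and>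
      (\<forall>r<dim_row A. (\<Sum>j\<in>S. c j * A $$ (r, j)) = 0))"

definition cols_min_lin_dep :: "'a::field mat \<Rightarrow> bool" where
  "cols_min_lin_dep A \<longleftrightarrow> cols_lin_dep A {0..<dim_col A} \<and>
      (\<forall>S. S \<subset> {0..<dim_col A} \<longrightarrow> \<not> cols_lin_dep A S)"

end

theory Submission
  imports Defs
begin


lemma rank_ge_indep:
  fixes A :: "'a::field mat"
  assumes T: "T \<subseteq> {0..<dim_col A}" and nd: "\<not> cols_lin_dep A T"
  shows "card T \<le> mat_rank A"
proof -
  interpret V: vec_space "TYPE('a)" "dim_row A" .
  have car: "A \<in> carrier_mat (dim_row A) (dim_col A)" by auto
  have finT: "finite T" using T finite_subset by blast
  have inj: "inj_on (col A) T"
  proof (rule inj_onI, rule ccontr)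
    fix s t assume st: "s \<in> T" "t \<in> T" "col A s = col A t" "s \<noteq> t"
    define c where "c = (\<lambda>j. if j = s then (1::'a) else if j = t then -1 else 0)"
    have "cols_lin_dep A T"
      unfolding cols_lin_dep_def
    proof (intro exI conjI allI impI)
      show "\<exists>j\<in>T. c j \<noteq> 0" using st by (auto simp: c_def)
      fix r assume r: "r < dim_row A"
      have e: "A $$ (r,s) = A $$ (r,t)" using st(3) r T st(1,2)
        by (metis atLeastLessThan_iff col_def index_vec subsetD)
      have "(\<Sum>j\<in>T. c j * A $$ (r, j)) = (\<Sum>j\<in>T. (if j = s then A $$ (r,s) else 0) - (if j = t then A $$ (r,t) else 0))"
        by (rule sum.cong) (auto simp: c_def st(4))
      also have "\<dots> = 0" using st finT by (simp add: sum_subtractf e)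
      finally show "(\<Sum>j\<in>T. c j * A $$ (r, j)) = 0" .
    qed
    with nd show False by simp
  qed
  let ?U = "col A ` T"
  have Ucar: "?U \<subseteq> carrier_vec (dim_row A)" by auto
  have Ucols: "?U \<subseteq> set (cols A)" using T by (auto simp: cols_def)
  have li: "V.lin_indpt ?U"
  proof
    assume "V.lin_dep ?U"
    from V.finite_lin_dep[OF _ this] finT Ucar
    obtain a v where a: "V.lincomb a ?U = 0\<^sub>v (dim_row A)" "v \<in> ?U" "a v \<noteq> 0" by auto
    define c where "c = (\<lambda>j. a (col A j))"
    have "cols_lin_dep A T"
      unfolding cols_lin_dep_def
    proof (intro exI conjI allI impI)
      show "\<exists>j\<in>T. c j \<noteq> 0" using a(2,3) by (auto simp: c_def)
      fix r assume r: "r < dim_row A"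
      have "0 = V.lincomb a ?U $ r" using a(1) r by simp
      also have "\<dots> = (\<Sum>x\<in>?U. a x * x $ r)" by (rule V.lincomb_index[OF r Ucar])
      also have "\<dots> = (\<Sum>j\<in>T. a (col A j) * col A j $ r)" by (rule sum.reindex[OF inj, unfolded comp_def])
      also have "\<dots> = (\<Sum>j\<in>T. c j * A $$ (r, j))"
        by (rule sum.cong) (use T r in \<open>auto simp: c_def\<close>)
      finally show "(\<Sum>j\<in>T. c j * A $$ (r, j)) = 0" by simp
    qed
    with nd show False by simp
  qed
  have "card ?U \<le> V.rank A" by (rule V.rank_ge_card_indpt[OF car Ucols li])
  then show ?thesis using card_image[OF inj] unfolding mat_rank_def by simp
qed

lemma rank_witness:
  fixes A :: "'a::field mat"
  shows "\<exists>T. T \<subseteq> {0..<dim_col A} \<and> \<not> cols_lin_dep A T \<and> card T = mat_rank A"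
proof -
  interpret V: vec_space "TYPE('a)" "dim_row A" .
  have car: "A \<in> carrier_mat (dim_row A) (dim_col A)" by auto
  obtain S where S: "maximal S (\<lambda>T. T \<subseteq> set (cols A) \<and> V.lin_indpt T)"
    using maximal_exists[of "(\<lambda>T. T \<subseteq> set (cols A) \<and> V.lin_indpt T)" "card (set (cols A))" "{}"]
    by (meson List.finite_set card_mono empty_iff empty_subsetI V.finite_lin_indpt2 rev_finite_subset)
  have rk: "V.rank A = card S" by (rule V.rank_card_indpt[OF car S])
  have Ssub: "S \<subseteq> set (cols A)" and Sli: "V.lin_indpt S" using S unfolding maximal_def by auto
  have finS: "finite S" using Ssub finite_subset by blast
  have Scar: "S \<subseteq> carrier_vec (dim_row A)" using Ssub by (auto simp: cols_def)
  define idx where "idx = (\<lambda>u. SOME j. j < dim_col A \<and> col A j = u)"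
  have idx: "idx u < dim_col A \<and> col A (idx u) = u" if "u \<in> S" for u
  proof -
    have "\<exists>j. j < dim_col A \<and> col A j = u" using that Ssub by (force simp: cols_def)
    then show ?thesis unfolding idx_def by (rule someI_ex)
  qed
  have inj: "inj_on idx S" by (metis idx inj_onI)
  define T where "T = idx ` S"
  have Tsub: "T \<subseteq> {0..<dim_col A}" using idx by (auto simp: T_def)
  have cardT: "card T = card S" unfolding T_def by (rule card_image[OF inj])
  have nd: "\<not> cols_lin_dep A T"
  proof
    assume "cols_lin_dep A T"
    then obtain c where c: "\<exists>j\<in>T. c j \<noteq> 0" "\<And>r. r < dim_row A \<Longrightarrow> (\<Sum>j\<in>T. c j * A $$ (r, j)) = 0"
      unfolding cols_lin_dep_def by blast
    then obtain u0 where u0: "u0 \<in> S" "c (idx u0) \<noteq> 0" unfolding T_def by auto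
    define a where "a = (\<lambda>u. c (idx u))"
    have lc: "V.lincomb a S = 0\<^sub>v (dim_row A)"
    proof (rule eq_vecI)
      show "dim_vec (V.lincomb a S) = dim_vec (0\<^sub>v (dim_row A))"
        using V.lincomb_dim[OF finS Scar] by simp
      fix r assume "r < dim_vec (0\<^sub>v (dim_row A))"
      then have r: "r < dim_row A" by simp
      have "V.lincomb a S $ r = (\<Sum>u\<in>S. a u * u $ r)" by (rule V.lincomb_index[OF r Scar])
      also have "\<dots> = (\<Sum>u\<in>S. c (idx u) * A $$ (r, idx u))"
        by (rule sum.cong) (use idx r in \<open>auto simp: a_def\<close>, metis idx index_col r)
      also have "\<dots> = (\<Sum>j\<in>T. c j * A $$ (r, j))" unfolding T_def
        by (rule sum.reindex[OF inj, unfolded comp_def, symmetric])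
      also have "\<dots> = 0" using c(2)[OF r] .
      finally show "V.lincomb a S $ r = 0\<^sub>v (dim_row A) $ r" using r by simp
    qed
    have "V.lin_dep S"
      using V.lin_dep_crit[OF finS subset_refl _ u0(1), of a] u0 lc by (auto simp: a_def)
    with Sli show False by simp
  qed
  show ?thesis using Tsub nd cardT rk unfolding mat_rank_def by auto
qed



lemma transfer_cols:
  fixes A B :: "'a::field mat"
  assumes bij: "bij_betw \<pi> {0..<dim_col A} {0..<dim_col B}"
    and eq: "\<And>T. T \<subseteq> {0..<dim_col A} \<Longrightarrow> cols_lin_dep A T \<longleftrightarrow> cols_lin_dep B (\<pi> ` T)"
  shows "mat_rank A = mat_rank B \<and> (cols_min_lin_dep A \<longleftrightarrow> cols_min_lin_dep B)"
proof -
  let ?FA = "{0..<dim_col A}" and ?FB = "{0..<dim_col B}"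
  have inj: "inj_on \<pi> ?FA" and img: "\<pi> ` ?FA = ?FB" using bij unfolding bij_betw_def by auto
  have pre: "\<pi> ` {x\<in>?FA. \<pi> x \<in> T'} = T'" if "T' \<subseteq> ?FB" for T'
  proof
    show "T' \<subseteq> \<pi> ` {x\<in>?FA. \<pi> x \<in> T'}"
    proof
      fix y assume y: "y \<in> T'"
      then have "y \<in> \<pi> ` ?FA" using that img by blast
      then obtain x where "x \<in> ?FA" "y = \<pi> x" by blast
      then show "y \<in> \<pi> ` {x\<in>?FA. \<pi> x \<in> T'}" using y by blast
    qed
  qed blast
  have presub: "{x\<in>?FA. \<pi> x \<in> T'} \<subseteq> ?FA" for T' by blast
  have cardpre: "card {x\<in>?FA. \<pi> x \<in> T'} = card T'" if "T' \<subseteq> ?FB" for T'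
  proof -
    have "card (\<pi> ` {x\<in>?FA. \<pi> x \<in> T'}) = card {x\<in>?FA. \<pi> x \<in> T'}"
      by (rule card_image[OF inj_on_subset[OF inj presub]])
    then show ?thesis using pre[OF that] by simp
  qed
  have r1: "mat_rank A \<le> mat_rank B"
  proof -
    obtain T where T: "T \<subseteq> ?FA" "\<not> cols_lin_dep A T" "card T = mat_rank A"
      using rank_witness by blast
    have c: "card (\<pi> ` T) = card T" using card_image[OF inj_on_subset[OF inj T(1)]] .
    have s: "\<pi> ` T \<subseteq> ?FB" using T(1) img by blast
    have n: "\<not> cols_lin_dep B (\<pi> ` T)" using T(2) eq[OF T(1)] by simp
    have "card (\<pi> ` T) \<le> mat_rank B" by (rule rank_ge_indep[OF s n])
    then show ?thesis using T c by simp
  qed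
  have r2: "mat_rank B \<le> mat_rank A"
  proof -
    obtain T where T: "T \<subseteq> ?FB" "\<not> cols_lin_dep B T" "card T = mat_rank B"
      using rank_witness by blast
    have n: "\<not> cols_lin_dep A {x\<in>?FA. \<pi> x \<in> T}" using eq[OF presub] pre[OF T(1)] T(2) by simp
    have "card {x\<in>?FA. \<pi> x \<in> T} \<le> mat_rank A"
      by (rule rank_ge_indep[OF presub n])
    then show ?thesis using T cardpre[OF T(1)] by simp
  qed
  have m: "cols_min_lin_dep A \<longleftrightarrow> cols_min_lin_dep B"
  proof
    assume a: "cols_min_lin_dep A"
    show "cols_min_lin_dep B" unfolding cols_min_lin_dep_def
    proof (intro conjI allI impI)
      show "cols_lin_dep B ?FB" using a eq[of ?FA] img by (simp add: cols_min_lin_dep_def)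
      fix S assume S: "S \<subset> ?FB"
      let ?S = "{x\<in>?FA. \<pi> x \<in> S}"
      have pS: "\<pi> ` ?S = S" using pre S by blast
      have "?S \<noteq> ?FA" using S pS img by auto
      then have "?S \<subset> ?FA" using presub by blast
      then have "\<not> cols_lin_dep A ?S" using a by (simp add: cols_min_lin_dep_def)
      then show "\<not> cols_lin_dep B S" using eq[OF presub] pS by simp
    qed
  next
    assume a: "cols_min_lin_dep B"
    show "cols_min_lin_dep A" unfolding cols_min_lin_dep_def
    proof (intro conjI allI impI)
      show "cols_lin_dep A ?FA" using a eq[of ?FA] img by (simp add: cols_min_lin_dep_def)
      fix S assume S: "S \<subset> ?FA"
      have "\<pi> ` S \<noteq> \<pi> ` ?FA" using inj_on_image_eq_iff[OF inj, of S ?FA] S by blast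
      then have "\<pi> ` S \<subset> \<pi> ` ?FA" using S by blast
      then have "\<pi> ` S \<subset> ?FB" using img by simp
      then have "\<not> cols_lin_dep B (\<pi> ` S)" using a by (simp add: cols_min_lin_dep_def)
      then show "\<not> cols_lin_dep A S" using eq[of S] S by auto
    qed
  qed
  show ?thesis using r1 r2 m by simp
qed



lemma funpow_period:
  fixes f :: "'a \<Rightarrow> 'a"
  assumes "f ^^ d = id"
  shows "f ^^ r = f ^^ (r mod d)"
proof -
  have "f ^^ r = f ^^ (r mod d + d * (r div d))" by simp
  also have "\<dots> = f ^^ (r mod d) \<circ> (f ^^ d) ^^ (r div d)" by (simp only: funpow_add funpow_mult)
  also have "\<dots> = f ^^ (r mod d)" using assms by (simp add: id_funpow)
  finally show ?thesis .
qed

lemma cyclic_order: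
  fixes f :: "'a \<Rightarrow> 'a"
  assumes bij: "bij f" and card: "card (range (\<lambda>r. f ^^ r)) = p" and p: "p \<ge> 2"
  shows "f ^^ a = f ^^ b \<longleftrightarrow> a mod p = b mod p"
proof -
  let ?F = "\<lambda>r. f ^^ r"
  have fin: "finite (range ?F)"
  proof (rule ccontr)
    assume "infinite (range ?F)"
    then have "card (range ?F) = 0" by simp
    then show False using card p by simp
  qed
  have sub: "?F ` {0..p} \<subseteq> range ?F" by blast
  have "card (?F ` {0..p}) \<le> p" using card_mono[OF fin sub] card by simp
  then have "\<not> inj_on ?F {0..p}" using card_image[of ?F "{0..p}"] by auto
  then obtain a0 b0 where ab: "a0 \<le> p" "b0 \<le> p" "a0 \<noteq> b0" "f ^^ a0 = f ^^ b0"
    unfolding inj_on_def by auto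
  obtain a1 b1 where ab1: "a1 < b1" "b1 \<le> p" "f ^^ a1 = f ^^ b1"
  proof (cases "a0 < b0")
    case True then show ?thesis by (rule that[of a0 b0]) (use ab in simp_all)
  next
    case False
    then have "b0 < a0" using ab(3) by simp
    then show ?thesis by (rule that[of b0 a0]) (use ab in simp_all)
  qed
  define d where "d = b1 - a1"
  have d: "0 < d" "d \<le> p" using ab1 unfolding d_def by simp_all
  have da: "d + a1 = b1" using ab1 by (simp add: d_def)
  have comp: "f ^^ d \<circ> f ^^ a1 = f ^^ a1"
  proof -
    have "f ^^ d \<circ> f ^^ a1 = f ^^ (d + a1)" by (simp only: funpow_add)
    also have "\<dots> = f ^^ b1" using da by simp
    also have "\<dots> = f ^^ a1" using ab1(3) by simp
    finally show ?thesis .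
  qed
  have su: "surj (f ^^ a1)" by (rule surj_fn[OF bij_is_surj[OF bij]])
  have fd: "f ^^ d = id"
  proof
    fix x
    obtain y where y: "x = (f ^^ a1) y" using surjD[OF su] by blast
    have "(f ^^ d) x = (f ^^ d \<circ> f ^^ a1) y" unfolding y by (simp only: comp_apply)
    also have "\<dots> = (f ^^ a1) y" unfolding comp ..
    finally show "(f ^^ d) x = id x" unfolding y by (simp only: id_apply)
  qed
  have rsub: "range ?F \<subseteq> ?F ` {0..<d}"
  proof
    fix x assume "x \<in> range ?F"
    then obtain r where "x = f ^^ r" by auto
    then have "x = f ^^ (r mod d)" using funpow_period[OF fd] by simp
    moreover have "r mod d \<in> {0..<d}" using d by simp
    ultimately show "x \<in> ?F ` {0..<d}" by blast
  qed
  have "p \<le> card (?F ` {0..<d})" using card card_mono[OF finite_imageI[OF finite_atLeastLessThan] rsub] by simp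
  also have "\<dots> \<le> d" using card_image_le[of "{0..<d}" ?F] by simp
  finally have dp: "d = p" using d by simp
  have imgp: "?F ` {0..<p} = range ?F" using rsub dp by blast
  have inj: "inj_on ?F {0..<p}"
    by (rule eq_card_imp_inj_on) (use imgp card in simp_all)
  have per: "f ^^ r = f ^^ (r mod p)" for r using funpow_period[OF fd[unfolded dp]] .
  have "f ^^ a = f ^^ b \<longleftrightarrow> f ^^ (a mod p) = f ^^ (b mod p)"
    using per[of a] per[of b] by simp
  also have "\<dots> \<longleftrightarrow> a mod p = b mod p"
  proof
    assume "f ^^ (a mod p) = f ^^ (b mod p)"
    then show "a mod p = b mod p" using inj p unfolding inj_on_def by simp
  qed simp
  finally show ?thesis .
qed



locale setting =
  fixes p k n :: nat and H :: "(nat \<Rightarrow> nat) set" and \<Omega> :: "nat \<Rightarrow> nat set" and g :: "nat \<Rightarrow> nat \<Rightarrow> nat"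
  assumes S: "InP_Cp_setting p k n H \<Omega> g"
begin

lemmas S' = S[unfolded InP_Cp_setting_def]
lemma prime: "prime p" using S' by (elim conjE)
lemma p2: "p \<ge> 2" using prime prime_ge_2_nat by blast
lemma grp: "perm_subgroup n H" using S' by (elim conjE)
lemma H_perm: "h \<in> H \<Longrightarrow> h permutes {0..<n}" using grp unfolding perm_subgroup_def by blast
lemma H_bij: "h \<in> H \<Longrightarrow> bij h" using H_perm permutes_bij by blast
lemma H_comp: "h \<in> H \<Longrightarrow> h' \<in> H \<Longrightarrow> h \<circ> h' \<in> H" using grp unfolding perm_subgroup_def by blast
lemma H_inv: "h \<in> H \<Longrightarrow> inv_into UNIV h \<in> H" using grp unfolding perm_subgroup_def by blast
lemma H_id: "id \<in> H" using grp unfolding perm_subgroup_def by blast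
lemma orb: "i < k \<Longrightarrow> \<exists>x<n. \<Omega> i = orbit_of H x" using S' by (elim conjE) simp
lemma cover: "x < n \<Longrightarrow> \<exists>i<k. x \<in> \<Omega> i" using S' by (elim conjE) simp
lemma disj: "i < k \<Longrightarrow> j < k \<Longrightarrow> i \<noteq> j \<Longrightarrow> \<Omega> i \<inter> \<Omega> j = {}" using S' by (elim conjE) simp
lemma cardO: "i < k \<Longrightarrow> card (\<Omega> i) = p" using S' by (elim conjE) simp
lemma gen: "i < k \<Longrightarrow> g i \<in> restr (\<Omega> i) ` H"
  "i < k \<Longrightarrow> restr (\<Omega> i) ` H = range (\<lambda>r. g i ^^ r)"
  "i < k \<Longrightarrow> card (restr (\<Omega> i) ` H) = p" using S' by (elim conjE; simp)+

lemma O_ne: assumes "i < k" shows "\<Omega> i \<noteq> {}"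
proof
  assume "\<Omega> i = {}"
  then have "card (\<Omega> i) = 0" by simp
  then show False using cardO[OF assms] p2 by simp
qed

lemma O_eq: assumes "i < k" "j < k" "x \<in> \<Omega> i" "x \<in> \<Omega> j" shows "i = j"
proof (rule ccontr)
  assume "i \<noteq> j"
  then have "\<Omega> i \<inter> \<Omega> j = {}" using disj assms by blast
  then show False using assms by blast
qed

lemma inv_app: assumes "h \<in> H" shows "inv_into UNIV h (h x) = x"
proof -
  have "inj h" using H_bij[OF assms] bij_is_inj by blast
  then show ?thesis by (rule inv_into_f_f) simp
qed
lemma app_inv: assumes "h \<in> H" shows "h (inv_into UNIV h x) = x"
proof -
  have "surj h" using H_bij[OF assms] bij_is_surj by blast
  then show ?thesis by (rule surj_f_inv_f)
qed

lemma orbit_move: assumes "y \<in> orbit_of H x" shows "orbit_of H y = orbit_of H x"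
proof -
  obtain h where h: "h \<in> H" "y = h x" using assms by (auto simp: orbit_of_def)
  show ?thesis
  proof
    show "orbit_of H y \<subseteq> orbit_of H x"
    proof
      fix z assume "z \<in> orbit_of H y"
      then obtain h' where h': "h' \<in> H" "z = h' y" by (auto simp: orbit_of_def)
      have "z = (h' \<circ> h) x" using h h' by simp
      moreover have "h' \<circ> h \<in> H" using H_comp h h' by blast
      ultimately show "z \<in> orbit_of H x" unfolding orbit_of_def by blast
    qed
    show "orbit_of H x \<subseteq> orbit_of H y"
    proof
      fix z assume "z \<in> orbit_of H x"
      then obtain h' where h': "h' \<in> H" "z = h' x" by (auto simp: orbit_of_def)
      have "z = (h' \<circ> inv_into UNIV h) y" using h h' inv_app by simp
      moreover have "h' \<circ> inv_into UNIV h \<in> H" using H_comp H_inv h h' by blast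
      ultimately show "z \<in> orbit_of H y" unfolding orbit_of_def by blast
    qed
  qed
qed

lemma inv1: assumes "h \<in> H" "i < k" "x \<in> \<Omega> i" shows "h x \<in> \<Omega> i"
proof -
  obtain x0 where x0: "\<Omega> i = orbit_of H x0" using orb assms by blast
  then obtain h' where "h' \<in> H" "x = h' x0" using assms by (auto simp: orbit_of_def)
  then have "h x = (h \<circ> h') x0" by simp
  moreover have "h \<circ> h' \<in> H" using H_comp \<open>h' \<in> H\<close> assms(1) by blast
  ultimately show ?thesis unfolding x0 orbit_of_def by blast
qed

lemma inv_iff: assumes "h \<in> H" "i < k" shows "h x \<in> \<Omega> i \<longleftrightarrow> x \<in> \<Omega> i"
proof
  assume "h x \<in> \<Omega> i"
  then have "inv_into UNIV h (h x) \<in> \<Omega> i" using inv1[OF H_inv[OF assms(1)] assms(2)] by blast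
  then show "x \<in> \<Omega> i" using inv_app[OF assms(1)] by simp
qed (rule inv1[OF assms])

lemma restr_bij: assumes "h \<in> H" "i < k" shows "bij (restr (\<Omega> i) h)"
proof (rule bijI)
  show "inj (restr (\<Omega> i) h)"
  proof (rule injI)
    fix x y assume e: "restr (\<Omega> i) h x = restr (\<Omega> i) h y"
    have ix: "h x \<in> \<Omega> i \<longleftrightarrow> x \<in> \<Omega> i" and iy: "h y \<in> \<Omega> i \<longleftrightarrow> y \<in> \<Omega> i"
      using inv_iff[OF assms] by blast+
    have ih: "inj h" using H_bij[OF assms(1)] bij_is_inj by blast
    show "x = y"
    proof (cases "x \<in> \<Omega> i"; cases "y \<in> \<Omega> i")
      assume "x \<in> \<Omega> i" "y \<in> \<Omega> i"
      then have "h x = h y" using e by (simp add: restr_def)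
      then show ?thesis by (rule injD[OF ih])
    next
      assume a: "x \<in> \<Omega> i" "y \<notin> \<Omega> i"
      then have hx: "h x = y" using e by (simp add: restr_def)
      have "h x \<in> \<Omega> i" using ix a(1) by simp
      then have False using hx a(2) by simp
      then show ?thesis ..
    next
      assume a: "x \<notin> \<Omega> i" "y \<in> \<Omega> i"
      then have hy: "x = h y" using e by (simp add: restr_def)
      have "h y \<in> \<Omega> i" using iy a(2) by simp
      then have False using hy a(1) by simp
      then show ?thesis ..
    next
      assume "x \<notin> \<Omega> i" "y \<notin> \<Omega> i"
      then show ?thesis using e by (simp add: restr_def)
    qed
  qed
  show "surj (restr (\<Omega> i) h)"
  proof -
    have "y \<in> range (restr (\<Omega> i) h)" for y
    proof (cases "y \<in> \<Omega> i")
      case True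
      let ?x = "inv_into UNIV h y"
      have "?x \<in> \<Omega> i" using inv_iff[OF assms, of ?x] True app_inv[OF assms(1)] by simp
      then have "restr (\<Omega> i) h ?x = y" using app_inv[OF assms(1)] by (simp add: restr_def)
      then show ?thesis using rangeI[of "restr (\<Omega> i) h" ?x] by simp
    next
      case False
      then have "restr (\<Omega> i) h y = y" by (simp add: restr_def)
      then show ?thesis using rangeI[of "restr (\<Omega> i) h" y] by simp
    qed
    then show ?thesis by blast
  qed
qed

lemma g_bij: assumes "i < k" shows "bij (g i)"
proof -
  obtain h where "h \<in> H" "g i = restr (\<Omega> i) h" using gen(1)[OF assms] by blast
  then show ?thesis using restr_bij[OF _ assms] by simp
qed

lemma g_order: assumes "i < k" shows "g i ^^ a = g i ^^ b \<longleftrightarrow> a mod p = b mod p"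
proof -
  have c: "card (range (\<lambda>r. g i ^^ r)) = p" using gen(2,3)[OF assms] by simp
  show ?thesis by (rule cyclic_order[OF g_bij[OF assms] c p2])
qed

end



locale normloc = setting +
  fixes \<nu> :: "nat \<Rightarrow> nat" and I J :: "nat set"
  assumes nu_perm: "\<nu> permutes {0..<n}"
    and nu_norm: "(\<lambda>h. \<nu> \<circ> h \<circ> inv_into UNIV \<nu>) ` H = H"
    and IJ: "I \<subseteq> {0..<k}" "J \<subseteq> {0..<k}"
    and nu_img: "\<nu> ` (\<Union>i\<in>I. \<Omega> i) = (\<Union>j\<in>J. \<Omega> j)"
begin

definition "\<nu>i = inv_into UNIV \<nu>"
definition "\<phi> h = \<nu> \<circ> h \<circ> \<nu>i"

lemma nu_bij: "bij \<nu>" using nu_perm permutes_bij by blast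
lemma nu_l: "\<nu>i (\<nu> x) = x"
proof -
  have "inj \<nu>" using nu_bij bij_is_inj by blast
  then show ?thesis unfolding \<nu>i_def by (rule inv_into_f_f) simp
qed
lemma nu_r: "\<nu> (\<nu>i x) = x"
proof -
  have "surj \<nu>" using nu_bij bij_is_surj by blast
  then show ?thesis unfolding \<nu>i_def by (rule surj_f_inv_f)
qed

lemma phi_H: assumes "h \<in> H" shows "\<phi> h \<in> H"
proof -
  have "\<phi> h \<in> (\<lambda>h. \<nu> \<circ> h \<circ> inv_into UNIV \<nu>) ` H" using assms unfolding \<phi>_def \<nu>i_def by blast
  then show ?thesis using nu_norm by simp
qed

lemma phi_surj: assumes "h' \<in> H" obtains h where "h \<in> H" "h' = \<phi> h"
proof -
  have "h' \<in> (\<lambda>h. \<nu> \<circ> h \<circ> inv_into UNIV \<nu>) ` H" using assms nu_norm by simp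
  then obtain h where "h \<in> H" "h' = \<nu> \<circ> h \<circ> inv_into UNIV \<nu>" by blast
  then show ?thesis using that unfolding \<phi>_def \<nu>i_def by blast
qed

lemma phi_app: "\<phi> h x = \<nu> (h (\<nu>i x))" by (simp add: \<phi>_def)

lemma phi_comp: "\<phi> (f \<circ> f') = \<phi> f \<circ> \<phi> f'"
  by (rule ext) (simp add: phi_app nu_l)

lemma phi_id: "\<phi> id = id"
proof
  fix x show "\<phi> id x = id x" unfolding phi_app by (simp add: nu_r)
qed

lemma phi_pow: "\<phi> (f ^^ r) = (\<phi> f) ^^ r"
proof (induction r)
  case 0 then show ?case using phi_id by (simp add: id_def)
next
  case (Suc r)
  have "\<phi> (f ^^ Suc r) = \<phi> (f \<circ> f ^^ r)" by (simp only: funpow.simps(2))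
  also have "\<dots> = \<phi> f \<circ> \<phi> (f ^^ r)" by (rule phi_comp)
  also have "\<dots> = \<phi> f \<circ> (\<phi> f) ^^ r" using Suc by (simp only:)
  also have "\<dots> = (\<phi> f) ^^ Suc r" by (simp only: funpow.simps(2))
  finally show ?case .
qed

lemma phi_inj: assumes "\<phi> f = \<phi> f'" shows "f = f'"
proof
  fix x
  have "\<phi> f (\<nu> x) = \<phi> f' (\<nu> x)" using assms by simp
  then have "\<nu> (f x) = \<nu> (f' x)" by (simp add: phi_app nu_l)
  then have "\<nu>i (\<nu> (f x)) = \<nu>i (\<nu> (f' x))" by simp
  then show "f x = f' x" by (simp add: nu_l)
qed

lemma nu_lt: "x < n \<Longrightarrow> \<nu> x < n"
  using permutes_in_image[OF nu_perm, of x] by simp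

lemma orbit_nu: "orbit_of H (\<nu> x) = \<nu> ` orbit_of H x"
proof
  show "orbit_of H (\<nu> x) \<subseteq> \<nu> ` orbit_of H x"
  proof
    fix z assume "z \<in> orbit_of H (\<nu> x)"
    then obtain h' where h': "h' \<in> H" "z = h' (\<nu> x)" by (auto simp: orbit_of_def)
    obtain h where h: "h \<in> H" "h' = \<phi> h" using phi_surj[OF h'(1)] by blast
    have "z = \<nu> (h x)" using h h' by (simp add: phi_app nu_l)
    moreover have "h x \<in> orbit_of H x" using h(1) unfolding orbit_of_def by blast
    ultimately show "z \<in> \<nu> ` orbit_of H x" by blast
  qed
  show "\<nu> ` orbit_of H x \<subseteq> orbit_of H (\<nu> x)"
  proof
    fix z assume "z \<in> \<nu> ` orbit_of H x"
    then obtain h where h: "h \<in> H" "z = \<nu> (h x)" by (auto simp: orbit_of_def)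
    have "z = \<phi> h (\<nu> x)" using h by (simp add: phi_app nu_l)
    moreover have "\<phi> h \<in> H" using phi_H[OF h(1)] .
    ultimately show "z \<in> orbit_of H (\<nu> x)" unfolding orbit_of_def by blast
  qed
qed

lemma nu_orbit_ex: assumes "i < k" shows "\<exists>j<k. \<nu> ` \<Omega> i = \<Omega> j"
proof -
  obtain x0 where x0: "x0 < n" "\<Omega> i = orbit_of H x0" using orb[OF assms] by blast
  obtain j where j: "j < k" "\<nu> x0 \<in> \<Omega> j" using cover[OF nu_lt[OF x0(1)]] by blast
  obtain y0 where y0: "\<Omega> j = orbit_of H y0" using orb[OF j(1)] by blast
  have "orbit_of H (\<nu> x0) = orbit_of H y0" using orbit_move j(2) y0 by simp
  then have "\<nu> ` \<Omega> i = \<Omega> j" using x0(2) y0 orbit_nu by simp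
  then show ?thesis using j(1) by blast
qed

definition "\<sigma> i = (SOME j. j < k \<and> \<nu> ` \<Omega> i = \<Omega> j)"

lemma sig: assumes "i < k" shows "\<sigma> i < k" "\<nu> ` \<Omega> i = \<Omega> (\<sigma> i)"
proof -
  have "\<sigma> i < k \<and> \<nu> ` \<Omega> i = \<Omega> (\<sigma> i)"
    unfolding \<sigma>_def by (rule someI_ex) (rule nu_orbit_ex[OF assms])
  then show "\<sigma> i < k" "\<nu> ` \<Omega> i = \<Omega> (\<sigma> i)" by simp_all
qed

lemma sig_J: assumes "i \<in> I" shows "\<sigma> i \<in> J"
proof -
  have ik: "i < k" using assms IJ by auto
  obtain y where y: "y \<in> \<Omega> (\<sigma> i)" using O_ne[OF sig(1)[OF ik]] by blast
  have "y \<in> \<nu> ` \<Omega> i" using y sig(2)[OF ik] by simp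
  then have "y \<in> \<nu> ` (\<Union>i\<in>I. \<Omega> i)" using assms by blast
  then have "y \<in> (\<Union>j\<in>J. \<Omega> j)" using nu_img by simp
  then obtain j where j: "j \<in> J" "y \<in> \<Omega> j" by blast
  have "j < k" using j(1) IJ by auto
  then have "\<sigma> i = j" using O_eq[OF sig(1)[OF ik] _ y j(2)] by simp
  then show ?thesis using j(1) by simp
qed

lemma sig_inj: "inj_on \<sigma> I"
proof (rule inj_onI)
  fix i i' assume a: "i \<in> I" "i' \<in> I" "\<sigma> i = \<sigma> i'"
  have ik: "i < k" "i' < k" using a IJ by auto
  have "\<nu> ` \<Omega> i = \<nu> ` \<Omega> i'" using sig(2)[OF ik(1)] sig(2)[OF ik(2)] a(3) by simp
  then have e: "\<Omega> i = \<Omega> i'" using inj_image_eq_iff[OF bij_is_inj[OF nu_bij]] by blast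
  obtain x where "x \<in> \<Omega> i" using O_ne[OF ik(1)] by blast
  then show "i = i'" using O_eq[OF ik] e by simp
qed

lemma sig_surj: assumes "j \<in> J" shows "\<exists>i\<in>I. \<sigma> i = j"
proof -
  have jk: "j < k" using assms IJ by auto
  obtain y where y: "y \<in> \<Omega> j" using O_ne[OF jk] by blast
  then have "y \<in> (\<Union>j\<in>J. \<Omega> j)" using assms by blast
  then have "y \<in> \<nu> ` (\<Union>i\<in>I. \<Omega> i)" using nu_img by simp
  then obtain i x where ix: "i \<in> I" "x \<in> \<Omega> i" "y = \<nu> x" by blast
  have ik: "i < k" using ix(1) IJ by auto
  have "y \<in> \<Omega> (\<sigma> i)" using ix(2,3) sig(2)[OF ik] by blast
  then have "\<sigma> i = j" using O_eq[OF sig(1)[OF ik] jk _ y] by simp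
  then show ?thesis using ix(1) by blast
qed

lemma sig_bij: "bij_betw \<sigma> I J"
  unfolding bij_betw_def using sig_inj sig_J sig_surj by blast

lemma mem_conv: assumes "i < k" shows "x \<in> \<Omega> (\<sigma> i) \<longleftrightarrow> \<nu>i x \<in> \<Omega> i"
proof
  assume "x \<in> \<Omega> (\<sigma> i)"
  then have "x \<in> \<nu> ` \<Omega> i" using sig(2)[OF assms] by simp
  then obtain z where "z \<in> \<Omega> i" "x = \<nu> z" by blast
  then show "\<nu>i x \<in> \<Omega> i" by (simp add: nu_l)
next
  assume "\<nu>i x \<in> \<Omega> i"
  then have "\<nu> (\<nu>i x) \<in> \<nu> ` \<Omega> i" by blast
  then show "x \<in> \<Omega> (\<sigma> i)" using sig(2)[OF assms] by (simp add: nu_r)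
qed

lemma restr_phi: assumes "i < k" shows "restr (\<Omega> (\<sigma> i)) (\<phi> h) = \<phi> (restr (\<Omega> i) h)"
proof
  fix x
  show "restr (\<Omega> (\<sigma> i)) (\<phi> h) x = \<phi> (restr (\<Omega> i) h) x"
  proof (cases "x \<in> \<Omega> (\<sigma> i)")
    case True
    then have "\<nu>i x \<in> \<Omega> i" using mem_conv[OF assms] by simp
    then show ?thesis using True by (simp add: restr_def phi_app)
  next
    case False
    then have "\<nu>i x \<notin> \<Omega> i" using mem_conv[OF assms] by simp
    then show ?thesis using False by (simp add: restr_def phi_app nu_r)
  qed
qed

lemma restr_ex: assumes "h \<in> H" "i < k" shows "\<exists>r. restr (\<Omega> i) h = g i ^^ r"
proof -
  have "restr (\<Omega> i) h \<in> restr (\<Omega> i) ` H" using assms(1) by blast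
  then show ?thesis using gen(2)[OF assms(2)] by auto
qed

lemma e_ex: assumes "i < k" shows "\<exists>e. \<phi> (g i) = g (\<sigma> i) ^^ e"
proof -
  obtain h0 where h0: "h0 \<in> H" "g i = restr (\<Omega> i) h0" using gen(1)[OF assms] by blast
  have "\<phi> (g i) = restr (\<Omega> (\<sigma> i)) (\<phi> h0)" using h0(2) restr_phi[OF assms] by simp
  then show ?thesis using restr_ex[OF phi_H[OF h0(1)] sig(1)[OF assms]] by simp
qed

definition "e i = (SOME e. \<phi> (g i) = g (\<sigma> i) ^^ e)"

lemma e: assumes "i < k" shows "\<phi> (g i) = g (\<sigma> i) ^^ e i"
  unfolding e_def by (rule someI_ex) (rule e_ex[OF assms])

lemma e_nz: assumes "i < k" shows "e i mod p \<noteq> 0"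
proof
  assume a: "e i mod p = 0"
  have "g (\<sigma> i) ^^ e i = g (\<sigma> i) ^^ 0" using g_order[OF sig(1)[OF assms], of "e i" 0] a by (simp only: mod_0)
  then have "\<phi> (g i) = \<phi> id" using e[OF assms] phi_id by simp
  then have gi: "g i = id" by (rule phi_inj)
  have "range (\<lambda>r. g i ^^ r) = {id}" using gi by (auto simp: id_funpow)
  then have "card (restr (\<Omega> i) ` H) = 1" using gen(2)[OF assms] by simp
  then show False using gen(3)[OF assms] p2 by simp
qed

end


definition depH :: "((nat \<Rightarrow> nat) \<Rightarrow> 'a::field vec) \<Rightarrow> (nat \<Rightarrow> nat) set \<Rightarrow> nat set \<Rightarrow> bool" where
  "depH \<gamma> H S \<longleftrightarrow> (\<exists>c. (\<exists>j\<in>S. c j \<noteq> 0) \<and> (\<forall>h\<in>H. (\<Sum>j\<in>S. c j * \<gamma> h $ j) = 0))"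

lemma of_nat_mod_ring_eq:
  "(of_nat a :: 'q::prime_card mod_ring) = of_nat b \<longleftrightarrow> a mod CARD('q) = b mod CARD('q)"
  using of_nat_eq_iff_cong_CHAR[where 'a="'q mod_ring", of a b] semiring_char_mod_ring[where 'n='q]
  by (simp add: cong_def)

context normloc
begin

lemma gamma_eq:
  assumes card: "CARD('q::prime_card) = p" and i: "i < k" and h: "h \<in> H" and r: "restr (\<Omega> i) h = g i ^^ r"
  shows "(gamma k \<Omega> g h :: 'q mod_ring vec) $ i = of_nat r"
proof -
  let ?L = "LEAST r. restr (\<Omega> i) h = g i ^^ r"
  have L: "restr (\<Omega> i) h = g i ^^ ?L" by (rule LeastI[of _ r]) (rule r)
  have "g i ^^ r = g i ^^ ?L" using r L by simp
  then have "r mod p = ?L mod p" using g_order[OF i] by simp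
  then have e: "(of_nat ?L :: 'q mod_ring) = of_nat r" using of_nat_mod_ring_eq[where 'q='q] card by simp
  have "(gamma k \<Omega> g h :: 'q mod_ring vec) $ i = of_nat ?L" unfolding gamma_def using i by simp
  then show ?thesis using e by simp
qed

lemma gamma_phi:
  assumes card: "CARD('q::prime_card) = p" and i: "i < k" and h: "h \<in> H"
  shows "(gamma k \<Omega> g (\<phi> h) :: 'q mod_ring vec) $ \<sigma> i = of_nat (e i) * (gamma k \<Omega> g h :: 'q mod_ring vec) $ i"
proof -
  obtain r where r: "restr (\<Omega> i) h = g i ^^ r" using restr_ex[OF h i] by blast
  have "restr (\<Omega> (\<sigma> i)) (\<phi> h) = \<phi> (g i ^^ r)" using restr_phi[OF i] r by simp
  also have "\<dots> = (\<phi> (g i)) ^^ r" by (rule phi_pow)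
  also have "\<dots> = (g (\<sigma> i) ^^ e i) ^^ r" using e[OF i] by simp
  also have "\<dots> = g (\<sigma> i) ^^ (e i * r)" by (rule funpow_mult)
  finally have r2: "restr (\<Omega> (\<sigma> i)) (\<phi> h) = g (\<sigma> i) ^^ (e i * r)" .
  have "(gamma k \<Omega> g (\<phi> h) :: 'q mod_ring vec) $ \<sigma> i = of_nat (e i * r)"
    by (rule gamma_eq[OF card sig(1)[OF i] phi_H[OF h] r2])
  also have "\<dots> = of_nat (e i) * of_nat r" by simp
  also have "of_nat r = (gamma k \<Omega> g h :: 'q mod_ring vec) $ i"
    by (rule gamma_eq[OF card i h r, symmetric])
  finally show ?thesis .
qed

lemma b_nz:
  assumes card: "CARD('q::prime_card) = p" and i: "i < k"
  shows "(of_nat (e i) :: 'q mod_ring) \<noteq> 0"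
proof
  assume "(of_nat (e i) :: 'q mod_ring) = 0"
  then have "(of_nat (e i) :: 'q mod_ring) = of_nat 0" by simp
  then have "e i mod p = 0" using of_nat_mod_ring_eq[where 'q='q, of "e i" 0] card by simp
  then show False using e_nz[OF i] by simp
qed

lemma depH_transfer:
  assumes card: "CARD('q::prime_card) = p" and S: "S \<subseteq> I"
  shows "depH (gamma k \<Omega> g :: _ \<Rightarrow> 'q mod_ring vec) H S \<longleftrightarrow> depH (gamma k \<Omega> g :: _ \<Rightarrow> 'q mod_ring vec) H (\<sigma> ` S)"
proof -
  let ?\<gamma> = "gamma k \<Omega> g :: _ \<Rightarrow> 'q mod_ring vec"
  define b where "b i = (of_nat (e i) :: 'q mod_ring)" for i
  have Sk: "i \<in> S \<Longrightarrow> i < k" for i using S IJ by auto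
  have bnz: "i \<in> S \<Longrightarrow> b i \<noteq> 0" for i unfolding b_def using b_nz[OF card Sk] by blast
  have injS: "inj_on \<sigma> S" using inj_on_subset[OF sig_inj S] .
  have gp: "?\<gamma> (\<phi> h) $ \<sigma> i = b i * ?\<gamma> h $ i" if "i \<in> S" "h \<in> H" for i h
    unfolding b_def by (rule gamma_phi[OF card Sk[OF that(1)] that(2)])
  have reidx: "(\<Sum>j\<in>\<sigma> ` S. c' j * ?\<gamma> (\<phi> h) $ j) = (\<Sum>i\<in>S. c' (\<sigma> i) * (b i * ?\<gamma> h $ i))"
    if "h \<in> H" for c' h
  proof -
    have "(\<Sum>j\<in>\<sigma> ` S. c' j * ?\<gamma> (\<phi> h) $ j) = (\<Sum>i\<in>S. c' (\<sigma> i) * ?\<gamma> (\<phi> h) $ \<sigma> i)"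
      by (rule sum.reindex[OF injS, unfolded comp_def])
    also have "\<dots> = (\<Sum>i\<in>S. c' (\<sigma> i) * (b i * ?\<gamma> h $ i))"
      by (rule sum.cong) (simp_all add: gp[OF _ that])
    finally show ?thesis .
  qed
  show ?thesis
  proof
    assume "depH ?\<gamma> H S"
    then obtain c where c: "\<exists>j\<in>S. c j \<noteq> 0" "\<And>h. h \<in> H \<Longrightarrow> (\<Sum>j\<in>S. c j * ?\<gamma> h $ j) = 0"
      unfolding depH_def by blast
    define si where "si = inv_into S \<sigma>"
    have si: "i \<in> S \<Longrightarrow> si (\<sigma> i) = i" for i unfolding si_def using injS by (simp add: inv_into_f_f)
    define c' where "c' j = c (si j) / b (si j)" for j
    show "depH ?\<gamma> H (\<sigma> ` S)" unfolding depH_def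
    proof (intro exI conjI ballI)
      obtain j0 where j0: "j0 \<in> S" "c j0 \<noteq> 0" using c(1) by blast
      have "c' (\<sigma> j0) \<noteq> 0" unfolding c'_def using si[OF j0(1)] j0 bnz[OF j0(1)] by simp
      then show "\<exists>j\<in>\<sigma> ` S. c' j \<noteq> 0" using j0(1) by blast
      fix h' assume "h' \<in> H"
      then obtain h where h: "h \<in> H" "h' = \<phi> h" using phi_surj by blast
      have "(\<Sum>j\<in>\<sigma> ` S. c' j * ?\<gamma> h' $ j) = (\<Sum>i\<in>S. c' (\<sigma> i) * (b i * ?\<gamma> h $ i))"
        using reidx[OF h(1)] h(2) by simp
      also have "\<dots> = (\<Sum>i\<in>S. c i * ?\<gamma> h $ i)"
        by (rule sum.cong) (simp_all add: c'_def si bnz)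
      also have "\<dots> = 0" using c(2)[OF h(1)] .
      finally show "(\<Sum>j\<in>\<sigma> ` S. c' j * ?\<gamma> h' $ j) = 0" .
    qed
  next
    assume "depH ?\<gamma> H (\<sigma> ` S)"
    then obtain c' where c': "\<exists>j\<in>\<sigma> ` S. c' j \<noteq> 0" "\<And>h. h \<in> H \<Longrightarrow> (\<Sum>j\<in>\<sigma> ` S. c' j * ?\<gamma> h $ j) = 0"
      unfolding depH_def by blast
    define c where "c i = c' (\<sigma> i) * b i" for i
    show "depH ?\<gamma> H S" unfolding depH_def
    proof (intro exI conjI ballI)
      obtain i0 where i0: "i0 \<in> S" "c' (\<sigma> i0) \<noteq> 0" using c'(1) by blast
      have "c i0 \<noteq> 0" unfolding c_def using i0 bnz[OF i0(1)] by simp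
      then show "\<exists>j\<in>S. c j \<noteq> 0" using i0(1) by blast
      fix h assume h: "h \<in> H"
      have "(\<Sum>i\<in>S. c i * ?\<gamma> h $ i) = (\<Sum>i\<in>S. c' (\<sigma> i) * (b i * ?\<gamma> h $ i))"
        by (rule sum.cong) (simp_all add: c_def)
      also have "\<dots> = (\<Sum>j\<in>\<sigma> ` S. c' j * ?\<gamma> (\<phi> h) $ j)" using reidx[OF h] by simp
      also have "\<dots> = 0" using c'(2)[OF phi_H[OF h]] .
      finally show "(\<Sum>i\<in>S. c i * ?\<gamma> h $ i) = 0" .
    qed
  qed
qed

end


lemma rows_ann:
  fixes M :: "'a::field mat"
  assumes gm: "generator_matrix k C M" and S: "S \<subseteq> {0..<k}"
  shows "(\<forall>r<dim_row M. (\<Sum>j\<in>S. c j * M $$ (r, j)) = 0) \<longleftrightarrow> (\<forall>v\<in>C. (\<Sum>j\<in>S. c j * v $ j) = 0)"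
proof -
  interpret V: vec_space "TYPE('a)" k .
  have dc: "dim_col M = k" and sp: "V.span (set (rows M)) = C"
    using gm unfolding generator_matrix_def by auto
  have rc: "set (rows M) \<subseteq> carrier_vec k" using dc by (auto simp: rows_def)
  have finS: "finite S" using S finite_subset by blast
  show ?thesis
  proof
    assume a: "\<forall>r<dim_row M. (\<Sum>j\<in>S. c j * M $$ (r, j)) = 0"
    have rz: "(\<Sum>j\<in>S. c j * x $ j) = 0" if x: "x \<in> set (rows M)" for x
    proof -
      obtain r where r: "r < dim_row M" "x = row M r" using x by (auto simp: rows_def)
      have "(\<Sum>j\<in>S. c j * x $ j) = (\<Sum>j\<in>S. c j * M $$ (r, j))"
        by (rule sum.cong) (use S r dc in auto)
      then show ?thesis using a r(1) by simp
    qed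
    show "\<forall>v\<in>C. (\<Sum>j\<in>S. c j * v $ j) = 0"
    proof
      fix v assume "v \<in> C"
      then have "v \<in> V.span (set (rows M))" using sp by simp
      moreover have rc': "set (rows M) \<subseteq> carrier (module_vec TYPE('a) k)" using rc by (simp add: module_vec_simps)
      ultimately obtain a A where aA: "A \<subseteq> set (rows M)" "V.lincomb a A = v"
        using V.in_span[OF rc'] by blast
      have Ac: "A \<subseteq> carrier_vec k" using aA(1) rc by blast
      have finA: "finite A" using aA(1) finite_subset by blast
      have vj: "v $ j = (\<Sum>x\<in>A. a x * x $ j)" if "j \<in> S" for j
      proof -
        have "j < k" using that S by auto
        then show ?thesis using V.lincomb_index[OF _ Ac, of j a] aA(2) by simp
      qed
      have "(\<Sum>j\<in>S. c j * v $ j) = (\<Sum>j\<in>S. c j * (\<Sum>x\<in>A. a x * x $ j))"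
        by (rule sum.cong) (simp_all add: vj)
      also have "\<dots> = (\<Sum>j\<in>S. \<Sum>x\<in>A. a x * (c j * x $ j))"
        by (simp add: sum_distrib_left mult.left_commute)
      also have "\<dots> = (\<Sum>x\<in>A. \<Sum>j\<in>S. a x * (c j * x $ j))" by (rule sum.swap)
      also have "\<dots> = (\<Sum>x\<in>A. a x * (\<Sum>j\<in>S. c j * x $ j))" by (simp add: sum_distrib_left)
      also have "\<dots> = (\<Sum>x\<in>A. a x * 0)"
      proof (rule sum.cong)
        fix x assume "x \<in> A"
        then have "x \<in> set (rows M)" using aA(1) by blast
        then show "a x * (\<Sum>j\<in>S. c j * x $ j) = a x * 0" using rz by simp
      qed simp
      also have "\<dots> = 0" by simp
      finally show "(\<Sum>j\<in>S. c j * v $ j) = 0" .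
    qed
  next
    assume a: "\<forall>v\<in>C. (\<Sum>j\<in>S. c j * v $ j) = 0"
    show "\<forall>r<dim_row M. (\<Sum>j\<in>S. c j * M $$ (r, j)) = 0"
    proof (intro allI impI)
      fix r assume r: "r < dim_row M"
      have "row M r \<in> set (rows M)" using r by (auto simp: rows_def)
      then have "row M r \<in> V.span (set (rows M))" using V.span_mem[OF rc] by blast
      then have "row M r \<in> C" using sp by simp
      then have "(\<Sum>j\<in>S. c j * row M r $ j) = 0" using a by blast
      moreover have "(\<Sum>j\<in>S. c j * row M r $ j) = (\<Sum>j\<in>S. c j * M $$ (r, j))"
        by (rule sum.cong) (use S r dc in auto)
      ultimately show "(\<Sum>j\<in>S. c j * M $$ (r, j)) = 0" by simp
    qed
  qed
qed

lemma depM_depH: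
  fixes M :: "'a::field mat"
  assumes gm: "generator_matrix k (\<gamma> ` H) M" and S: "S \<subseteq> {0..<k}"
  shows "(\<exists>c. (\<exists>j\<in>S. c j \<noteq> 0) \<and> (\<forall>r<dim_row M. (\<Sum>j\<in>S. c j * M $$ (r, j)) = 0)) \<longleftrightarrow> depH \<gamma> H S"
  unfolding depH_def rows_ann[OF gm S] by blast

lemma reindex_dep:
  assumes inj: "inj_on f T"
  shows "(\<exists>c. (\<exists>t\<in>T. c t \<noteq> (0::'a::field)) \<and> (\<forall>r<m. (\<Sum>t\<in>T. c t * F r (f t)) = 0))
     \<longleftrightarrow> (\<exists>c. (\<exists>j\<in>f ` T. c j \<noteq> 0) \<and> (\<forall>r<m. (\<Sum>j\<in>f ` T. c j * F r j) = 0))"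
proof
  assume "\<exists>c. (\<exists>t\<in>T. c t \<noteq> 0) \<and> (\<forall>r<m. (\<Sum>t\<in>T. c t * F r (f t)) = 0)"
  then obtain c where c: "\<exists>t\<in>T. c t \<noteq> 0" "\<forall>r<m. (\<Sum>t\<in>T. c t * F r (f t)) = 0" by blast
  define c' where "c' = c \<circ> inv_into T f"
  have cc: "t \<in> T \<Longrightarrow> c' (f t) = c t" for t unfolding c'_def using inj by (simp add: inv_into_f_f)
  show "\<exists>c. (\<exists>j\<in>f ` T. c j \<noteq> 0) \<and> (\<forall>r<m. (\<Sum>j\<in>f ` T. c j * F r j) = 0)"
  proof (intro exI conjI allI impI)
    obtain t0 where t0: "t0 \<in> T" "c t0 \<noteq> 0" using c(1) by blast
    then have "c' (f t0) \<noteq> 0" using cc by simp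
    then show "\<exists>j\<in>f ` T. c' j \<noteq> 0" using t0(1) by blast
    fix r assume r: "r < m"
    have "(\<Sum>j\<in>f ` T. c' j * F r j) = (\<Sum>t\<in>T. c' (f t) * F r (f t))"
      by (rule sum.reindex[OF inj, unfolded comp_def])
    also have "\<dots> = (\<Sum>t\<in>T. c t * F r (f t))" by (rule sum.cong) (simp_all add: cc)
    finally show "(\<Sum>j\<in>f ` T. c' j * F r j) = 0" using c(2) r by simp
  qed
next
  assume "\<exists>c. (\<exists>j\<in>f ` T. c j \<noteq> 0) \<and> (\<forall>r<m. (\<Sum>j\<in>f ` T. c j * F r j) = 0)"
  then obtain c where c: "\<exists>j\<in>f ` T. c j \<noteq> 0" "\<forall>r<m. (\<Sum>j\<in>f ` T. c j * F r j) = 0" by blast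
  show "\<exists>c. (\<exists>t\<in>T. c t \<noteq> 0) \<and> (\<forall>r<m. (\<Sum>t\<in>T. c t * F r (f t)) = 0)"
  proof (intro exI conjI allI impI)
    obtain j0 where j0: "j0 \<in> f ` T" "c j0 \<noteq> 0" using c(1) by blast
    then obtain t0 where "t0 \<in> T" "j0 = f t0" by blast
    then show "\<exists>t\<in>T. (c \<circ> f) t \<noteq> 0" using j0(2) by auto
    fix r assume r: "r < m"
    have "(\<Sum>t\<in>T. (c \<circ> f) t * F r (f t)) = (\<Sum>j\<in>f ` T. c j * F r j)"
      by (simp add: sum.reindex[OF inj])
    then show "(\<Sum>t\<in>T. (c \<circ> f) t * F r (f t)) = 0" using c(2) r by simp
  qed
qed

lemma pick_bij:
  assumes "finite I"
  shows "bij_betw (pick I) {0..<card I} I"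
proof -
  have inj: "inj_on (pick I) {0..<card I}"
  proof (rule inj_onI)
    fix a b assume ab: "a \<in> {0..<card I}" "b \<in> {0..<card I}" "pick I a = pick I b"
    show "a = b"
    proof (rule ccontr)
      assume "a \<noteq> b"
      then have "a < b \<or> b < a" by arith
      then show False
      proof
        assume "a < b" then have "pick I a < pick I b" using pick_mono_le[of b I a] ab by simp
        then show False using ab(3) by simp
      next
        assume "b < a" then have "pick I b < pick I a" using pick_mono_le[of a I b] ab by simp
        then show False using ab(3) by simp
      qed
    qed
  qed
  have img: "pick I ` {0..<card I} = I"
  proof
    show "pick I ` {0..<card I} \<subseteq> I"
    proof
      fix x assume "x \<in> pick I ` {0..<card I}"
      then obtain t where "t < card I" "x = pick I t" by auto
      then show "x \<in> I" using pick_in_set_le by simp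
    qed
    show "I \<subseteq> pick I ` {0..<card I}"
    proof
      fix j assume j: "j \<in> I"
      have "{a\<in>I. a < j} \<subset> I" using j by blast
      then have "card {a\<in>I. a < j} < card I" using assms psubset_card_mono by blast
      moreover have "pick I (card {a\<in>I. a < j}) = j" by (rule pick_card_in_set[OF j])
      ultimately show "j \<in> pick I ` {0..<card I}" using rev_image_eqI[of "card {a\<in>I. a < j}" "{0..<card I}" j "pick I"] by simp
    qed
  qed
  show ?thesis unfolding bij_betw_def using inj img by blast
qed

lemma cols_sub_dep:
  fixes M :: "'a::field mat"
  assumes I: "I \<subseteq> {0..<dim_col M}" and T: "T \<subseteq> {0..<card I}"
  shows "cols_lin_dep (cols_sub M I) T \<longleftrightarrow>
    (\<exists>c. (\<exists>j\<in>pick I ` T. c j \<noteq> 0) \<and> (\<forall>r<dim_row M. (\<Sum>j\<in>pick I ` T. c j * M $$ (r, j)) = 0))"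
proof -
  have finI: "finite I" using I finite_subset by blast
  have ci: "{j. j < dim_col M \<and> j \<in> I} = I" using I by auto
  have cr: "{i. i < dim_row M \<and> i \<in> UNIV} = {0..<dim_row M}" by auto
  have dr: "dim_row (cols_sub M I) = dim_row M" unfolding cols_sub_def dim_submatrix cr by simp
  have ent: "cols_sub M I $$ (r, t) = M $$ (r, pick I t)" if "r < dim_row M" "t \<in> T" for r t
  proof -
    have "r < card {i. i < dim_row M \<and> i \<in> UNIV}" using that(1) cr by simp
    moreover have "t < card {j. j < dim_col M \<and> j \<in> I}" using that(2) T ci by auto
    ultimately show ?thesis unfolding cols_sub_def by (simp add: submatrix_index pick_UNIV)
  qed
  have inj: "inj_on (pick I) T" using inj_on_subset[OF bij_betw_imp_inj_on[OF pick_bij[OF finI]] T] .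
  have "cols_lin_dep (cols_sub M I) T \<longleftrightarrow>
     (\<exists>c. (\<exists>t\<in>T. c t \<noteq> 0) \<and> (\<forall>r<dim_row M. (\<Sum>t\<in>T. c t * M $$ (r, pick I t)) = 0))"
  proof -
    have eqs: "r < dim_row M \<Longrightarrow> (\<Sum>t\<in>T. c t * cols_sub M I $$ (r, t)) = (\<Sum>t\<in>T. c t * M $$ (r, pick I t))"
      for c r by (rule sum.cong) (simp_all add: ent)
    show ?thesis unfolding cols_lin_dep_def dr by (simp add: eqs)
  qed
  also have "\<dots> \<longleftrightarrow> (\<exists>c. (\<exists>j\<in>pick I ` T. c j \<noteq> 0) \<and> (\<forall>r<dim_row M. (\<Sum>j\<in>pick I ` T. c j * M $$ (r, j)) = 0))"
    by (rule reindex_dep[OF inj, where F = "\<lambda>r j. M $$ (r, j)"])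
  finally show ?thesis .
qed

lemma dim_col_cols_sub: "I \<subseteq> {0..<dim_col M} \<Longrightarrow> dim_col (cols_sub M I) = card I"
proof -
  assume I: "I \<subseteq> {0..<dim_col M}"
  have ci: "{j. j < dim_col M \<and> j \<in> I} = I" using I by auto
  show ?thesis unfolding cols_sub_def dim_submatrix ci ..
qed



theorem lemma5p3:
  fixes k n :: nat and H :: "(nat \<Rightarrow> nat) set" and \<Omega> :: "nat \<Rightarrow> nat set"
    and g :: "nat \<Rightarrow> nat \<Rightarrow> nat" and M :: "'p::prime_card mod_ring mat"
    and I J :: "nat set" and \<nu> :: "nat \<Rightarrow> nat"
  assumes "InP_Cp_setting CARD('p) k n H \<Omega> g"
    and "generator_matrix k ((gamma k \<Omega> g :: (nat \<Rightarrow> nat) \<Rightarrow> 'p mod_ring vec) ` H) M"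
    and "I \<subseteq> {0..<k}" and "J \<subseteq> {0..<k}"
    and "\<nu> permutes {0..<n}" and "(\<lambda>h. \<nu> \<circ> h \<circ> inv_into UNIV \<nu>) ` H = H"
    and "\<nu> ` (\<Union>i\<in>I. \<Omega> i) = (\<Union>j\<in>J. \<Omega> j)"
  shows "mat_rank (cols_sub M I) = mat_rank (cols_sub M J)
     \<and> (cols_min_lin_dep (cols_sub M I) \<longleftrightarrow> cols_min_lin_dep (cols_sub M J))"
proof -
  interpret N: normloc "CARD('p)" k n H \<Omega> g \<nu> I J
    by unfold_locales (fact assms)+
  let ?\<gamma> = "gamma k \<Omega> g :: (nat \<Rightarrow> nat) \<Rightarrow> 'p mod_ring vec"
  note gm = assms(2)
  have dcM: "dim_col M = k" using gm unfolding generator_matrix_def by blast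
  have Isub: "I \<subseteq> {0..<dim_col M}" and Jsub: "J \<subseteq> {0..<dim_col M}" using assms(3,4) dcM by simp_all
  have finI: "finite I" and finJ: "finite J" using assms(3,4) finite_subset by blast+
  have bI: "bij_betw (pick I) {0..<card I} I" by (rule pick_bij[OF finI])
  have bJ: "bij_betw (pick J) {0..<card J} J" by (rule pick_bij[OF finJ])
  define \<pi> where "\<pi> = inv_into {0..<card J} (pick J) \<circ> (N.\<sigma> \<circ> pick I)"
  have b\<pi>: "bij_betw \<pi> {0..<card I} {0..<card J}"
    unfolding \<pi>_def by (rule bij_betw_trans[OF bij_betw_trans[OF bI N.sig_bij] bij_betw_inv_into[OF bJ]])
  have pJ: "pick J (inv_into {0..<card J} (pick J) x) = x" if "x \<in> J" for x
  proof -
    have "x \<in> pick J ` {0..<card J}" using that bij_betw_imp_surj_on[OF bJ] by simp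
    then show ?thesis by (rule f_inv_into_f)
  qed
  have sJ: "N.\<sigma> (pick I t) \<in> J" if "t \<in> {0..<card I}" for t
    using N.sig_J bij_betw_apply[OF bI that] by blast
  have pT: "pick J ` \<pi> ` T = N.\<sigma> ` pick I ` T" if T: "T \<subseteq> {0..<card I}" for T
  proof -
    have "pick J ` \<pi> ` T = (\<lambda>t. pick J (\<pi> t)) ` T" by (simp add: image_image)
    also have "\<dots> = (\<lambda>t. N.\<sigma> (pick I t)) ` T"
    proof (rule image_cong[OF refl])
      fix t assume "t \<in> T"
      then have "t \<in> {0..<card I}" using T by blast
      then show "pick J (\<pi> t) = N.\<sigma> (pick I t)" unfolding \<pi>_def using pJ[OF sJ] by simp
    qed
    also have "\<dots> = N.\<sigma> ` pick I ` T" by (simp add: image_image)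
    finally show ?thesis .
  qed
  have dA: "dim_col (cols_sub M I) = card I" by (rule dim_col_cols_sub[OF Isub])
  have dB: "dim_col (cols_sub M J) = card J" by (rule dim_col_cols_sub[OF Jsub])
  have eq: "cols_lin_dep (cols_sub M I) T \<longleftrightarrow> cols_lin_dep (cols_sub M J) (\<pi> ` T)"
    if T: "T \<subseteq> {0..<card I}" for T
  proof -
    have PI: "pick I ` T \<subseteq> I" using T bij_betw_imp_surj_on[OF bI] by blast
    have PIk: "pick I ` T \<subseteq> {0..<k}" using PI assms(3) by blast
    have PT: "\<pi> ` T \<subseteq> {0..<card J}" using T bij_betw_imp_surj_on[OF b\<pi>] by blast
    have SJ: "N.\<sigma> ` pick I ` T \<subseteq> J" using PI N.sig_J by blast
    have SJk: "N.\<sigma> ` pick I ` T \<subseteq> {0..<k}" using SJ assms(4) by blast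
    have "cols_lin_dep (cols_sub M I) T \<longleftrightarrow>
      (\<exists>c. (\<exists>j\<in>pick I ` T. c j \<noteq> 0) \<and> (\<forall>r<dim_row M. (\<Sum>j\<in>pick I ` T. c j * M $$ (r, j)) = 0))"
      by (rule cols_sub_dep[OF Isub T])
    also have "\<dots> \<longleftrightarrow> depH ?\<gamma> H (pick I ` T)" by (rule depM_depH[OF gm PIk])
    also have "\<dots> \<longleftrightarrow> depH ?\<gamma> H (N.\<sigma> ` pick I ` T)" by (rule N.depH_transfer[OF refl PI])
    also have "\<dots> \<longleftrightarrow> (\<exists>c. (\<exists>j\<in>N.\<sigma> ` pick I ` T. c j \<noteq> 0) \<and>
        (\<forall>r<dim_row M. (\<Sum>j\<in>N.\<sigma> ` pick I ` T. c j * M $$ (r, j)) = 0))"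
      by (rule depM_depH[OF gm SJk, symmetric])
    also have "\<dots> \<longleftrightarrow> (\<exists>c. (\<exists>j\<in>pick J ` \<pi> ` T. c j \<noteq> 0) \<and>
        (\<forall>r<dim_row M. (\<Sum>j\<in>pick J ` \<pi> ` T. c j * M $$ (r, j)) = 0))"
      unfolding pT[OF T] ..
    also have "\<dots> \<longleftrightarrow> cols_lin_dep (cols_sub M J) (\<pi> ` T)"
      by (rule cols_sub_dep[OF Jsub PT, symmetric])
    finally show ?thesis .
  qed
  show ?thesis
  proof (rule transfer_cols)
    show "bij_betw \<pi> {0..<dim_col (cols_sub M I)} {0..<dim_col (cols_sub M J)}"
      unfolding dA dB by (rule b\<pi>)
    fix T assume "T \<subseteq> {0..<dim_col (cols_sub M I)}"
    then show "cols_lin_dep (cols_sub M I) T \<longleftrightarrow> cols_lin_dep (cols_sub M J) (\<pi> ` T)"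
      using eq dA by simp
  qed
qed


end
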